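(* Let $G$ be a connected simple graph without bridges whose edge set is identified with $[d+1]$, let $B_1,\dots,B_n$ be the bases (spanning trees) of its graphic matroid, all of cardinality $k$, and let $P=\operatorname{tconv}(V)$ with $V=(-e_{B_1},\dots,-e_{B_n})$. Then the origin $\mathbf{0}\in\mathbb{T}^d$ lies in $P$, and $\operatorname{type}_V(\mathbf{0})=(T^{(0)}_1,\dots,T^{(0)}_{d+1})$ with $T^{(0)}_i=\{j\in[n]: i\in B_j\}$.
   Context: Tropical arithmetic is min-plus; $\mathbb{T}^d=\mathbb{R}^{d+1}/\mathbb{R}(1,\dots,1)$; $\operatorname{tconv}\{v_1,\dots,v_n\}=\{\bigoplus_l\lambda_l\odot v_l:\lambda_l\in\mathbb{R}\}$; $e_B=\sum_{i\in B}e_i$. For $m\in[d+1]$ let $\bar S_m=\{\xi\in\mathbb{T}^d:\xi_m=\min_i\xi_i\}$. For $V=(v_1,\dots,v_n)$ and $x\in\mathbb{T}^d$, $\operatorname{type}_V(x)=(T_1,\dots,T_{d+1})$ with $T_m=\{l\in[n]:v_l\in x+\bar S_m\}$. *)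

theory Defs
  imports Complex_Main
begin

text \<open>A point of T^d = R^(d+1)/R(1,...,1) is represented by a function nat => real,
  of which only the coordinates 1..d+1 matter.  The tropical convex hull of
  v_1..v_n consists of all classes of (min_l (lambda_l + v_l i))_i; since the
  lambda_l range over all reals, a representative x lies in the hull iff it is
  of this form exactly.\<close>

definition tconv_mem :: "nat \<Rightarrow> nat \<Rightarrow> (nat \<Rightarrow> nat \<Rightarrow> real) \<Rightarrow> (nat \<Rightarrow> real) \<Rightarrow> bool" where
  "tconv_mem d n v x \<longleftrightarrow>
     (\<exists>lam :: nat \<Rightarrow> real. \<forall>i\<in>{1..d+1}. x i = (MIN l\<in>{1..n}. lam l + v l i))"

definition in_sector :: "nat \<Rightarrow> nat \<Rightarrow> (nat \<Rightarrow> real) \<Rightarrow> bool" where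
  "in_sector d m \<xi> \<longleftrightarrow> \<xi> m = (MIN i\<in>{1..d+1}. \<xi> i)"

definition ttype :: "nat \<Rightarrow> nat \<Rightarrow> (nat \<Rightarrow> nat \<Rightarrow> real) \<Rightarrow> (nat \<Rightarrow> real) \<Rightarrow> nat \<Rightarrow> nat set" where
  "ttype d n v x m = {l\<in>{1..n}. in_sector d m (\<lambda>i. v l i - x i)}"

definition joined :: "'a set set \<Rightarrow> 'a \<Rightarrow> 'a \<Rightarrow> bool" where
  "joined F u w \<longleftrightarrow> (u, w) \<in> {(x, y). \<exists>e\<in>F. e = {x, y}}\<^sup>*"

definition connected_on :: "'a set \<Rightarrow> 'a set set \<Rightarrow> bool" where
  "connected_on Vs F \<longleftrightarrow> Vs \<noteq> {} \<and> (\<forall>u\<in>Vs. \<forall>w\<in>Vs. joined F u w)"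

definition simple_graph_lab :: "'a set \<Rightarrow> nat \<Rightarrow> (nat \<Rightarrow> 'a set) \<Rightarrow> bool" where
  "simple_graph_lab Vs d E \<longleftrightarrow> finite Vs \<and> inj_on E {1..d+1} \<and>
     (\<forall>i\<in>{1..d+1}. E i \<subseteq> Vs \<and> card (E i) = 2)"

definition is_bridge :: "'a set \<Rightarrow> nat \<Rightarrow> (nat \<Rightarrow> 'a set) \<Rightarrow> nat \<Rightarrow> bool" where
  "is_bridge Vs d E i \<longleftrightarrow> i \<in> {1..d+1} \<and> \<not> connected_on Vs (E ` ({1..d+1} - {i}))"

definition graphic_indep :: "nat \<Rightarrow> (nat \<Rightarrow> 'a set) \<Rightarrow> nat set \<Rightarrow> bool" where
  "graphic_indep d E B \<longleftrightarrow> B \<subseteq> {1..d+1} \<and>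
     (\<forall>i\<in>B. \<forall>u w. E i = {u, w} \<longrightarrow> \<not> joined (E ` (B - {i})) u w)"

definition graphic_basis :: "nat \<Rightarrow> (nat \<Rightarrow> 'a set) \<Rightarrow> nat set \<Rightarrow> bool" where
  "graphic_basis d E B \<longleftrightarrow> graphic_indep d E B \<and>
     (\<forall>B'. graphic_indep d E B' \<and> B \<subseteq> B' \<longrightarrow> B' = B)"

end

theory Submission
  imports Defs
begin

lemma joined_empty: "joined {} u w \<longleftrightarrow> u = w"
  unfolding joined_def by simp

lemma single_indep:
  assumes "simple_graph_lab Vs d E" "i \<in> {1..d+1}"
  shows "graphic_indep d E {i}"
proof -
  have c: "card (E i) = 2" using assms unfolding simple_graph_lab_def by auto
  show ?thesis unfolding graphic_indep_def
  proof (intro conjI ballI allI impI)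
    show "{i} \<subseteq> {1..d+1}" using assms(2) by auto
  next
    fix j u w assume "j \<in> {i}" "E j = {u, w}"
    then have "u \<noteq> w" using c by auto
    then show "\<not> joined (E ` ({i} - {j})) u w" using \<open>j \<in> {i}\<close> by (simp add: joined_empty)
  qed
qed

lemma basis_exists:
  assumes "simple_graph_lab Vs d E" "i \<in> {1..d+1}"
  shows "\<exists>B. graphic_basis d E B \<and> i \<in> B"
proof -
  let ?A = "{B. graphic_indep d E B}"
  have fin: "finite ?A"
    by (rule finite_subset[of _ "Pow {1..d+1}"]) (auto simp: graphic_indep_def)
  have "{i} \<in> ?A" using single_indep[OF assms] by simp
  from finite_has_maximal2[OF fin this] obtain m where
    m: "m \<in> ?A" "{i} \<subseteq> m" "\<forall>b\<in>?A. m \<le> b \<longrightarrow> m = b" by blast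
  then have "graphic_basis d E m" unfolding graphic_basis_def by auto
  with m show ?thesis by blast
qed

theorem mainTheorem5:
  fixes Vs :: "'a set" and d n k :: nat and E :: "nat \<Rightarrow> 'a set"
    and Bs :: "nat \<Rightarrow> nat set" and v :: "nat \<Rightarrow> nat \<Rightarrow> real"
  assumes "simple_graph_lab Vs d E"
    and "connected_on Vs (E ` {1..d+1})"
    and "\<forall>i\<in>{1..d+1}. \<not> is_bridge Vs d E i"
    and "bij_betw Bs {1..n} {B. graphic_basis d E B}"
    and "\<forall>j\<in>{1..n}. card (Bs j) = k"
    and "\<forall>l i. v l i = - (if i \<in> Bs l then 1 else 0)"
  shows "tconv_mem d n v (\<lambda>_. 0)
    \<and> (\<forall>i\<in>{1..d+1}. ttype d n v (\<lambda>_. 0) i = {j\<in>{1..n}. i \<in> Bs j})"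
proof -
  have bij: "Bs ` {1..n} = {B. graphic_basis d E B}" using assms(4) by (simp add: bij_betw_def)
  have cover: "\<exists>j\<in>{1..n}. i \<in> Bs j" if ii: "i \<in> {1..d+1}" for i
  proof -
    obtain B where "graphic_basis d E B" "i \<in> B" using basis_exists[OF assms(1) ii] by blast
    then obtain j where "j \<in> {1..n}" "B = Bs j" using bij by (metis (mono_tags) imageE mem_Collect_eq)
    then show ?thesis using \<open>i \<in> B\<close> by blast
  qed
  have sub: "Bs j \<subseteq> {1..d+1}" "Bs j \<noteq> {}" if "j \<in> {1..n}" for j
  proof -
    have b: "graphic_basis d E (Bs j)" using bij that by blast
    then show "Bs j \<subseteq> {1..d+1}" unfolding graphic_basis_def graphic_indep_def by auto
    show "Bs j \<noteq> {}"
    proof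
      assume "Bs j = {}"
      have "graphic_indep d E {1}" by (rule single_indep[OF assms(1)]) simp
      with b \<open>Bs j = {}\<close> show False unfolding graphic_basis_def by blast
    qed
  qed
  have part1: "tconv_mem d n v (\<lambda>_. 0)"
    unfolding tconv_mem_def
  proof (intro exI[of _ "\<lambda>_. 1"] ballI)
    fix i assume i: "i \<in> {1..d+1}"
    obtain j where j: "j \<in> {1..n}" "i \<in> Bs j" using cover[OF i] by blast
    have "(MIN l\<in>{1..n}. 1 + v l i) = 0"
      by (rule Min_eqI) (use j assms(6) in auto)
    then show "(0::real) = (MIN l\<in>{1..n}. 1 + v l i)" by simp
  qed
  have part2: "ttype d n v (\<lambda>_. 0) i = {j\<in>{1..n}. i \<in> Bs j}" if i: "i \<in> {1..d+1}" for i
  proof -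
    have mn: "(MIN i'\<in>{1..d+1}. v l i' - 0) = -1" if l: "l \<in> {1..n}" for l
    proof -
      obtain i' where "i' \<in> Bs l" using sub(2)[OF l] by blast
      then have "i' \<in> {1..d+1}" using sub(1)[OF l] by blast
      show ?thesis
        by (rule Min_eqI) (use \<open>i' \<in> Bs l\<close> \<open>i' \<in> {1..d+1}\<close> assms(6) in auto)
    qed
    show ?thesis unfolding ttype_def in_sector_def
      using mn assms(6) by auto
  qed
  show ?thesis using part1 part2 by blast
qed

end
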